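(* Let $c>0$ be a constant. There is a constant $C>0$ (depending only on $c$) such that the following holds. Let $Q$ be a set of at most $n$ integers, each of absolute value at most $2^{cn}$, and let $1\le k\le |Q|$ be such that $\left|w\left(\binom{Q}{k}\right)\right|\ge |w(2^Q)|/|Q|$. Let $X$ be a real number with $4\le X\le |w(2^Q)|$ and let $p$ be a uniformly random prime in $[X/2,X]$. Then with probability at least $9/10$ over the choice of $p$, \[\left|\left\{a\in\mathbb{Z}_p \colon \text{there exists } M'\subseteq Q,\ |M'|=k,\ w(M')\equiv a \pmod p\right\}\right|\ \ge\ \frac{p}{C n^2}.\]
   Context: For a finite set of integers $S$, $w(S)=\sum_{a\in S}a$; $2^S$ is the set of all subsets of $S$; $\binom{S}{k}$ is the set of all $k$-element subsets of $S$; for a family $\mathcal F$ of sets, $w(\mathcal F)=\{w(A)\colon A\in\mathcal F\}$ (a set of distinct integers). $\mathbb Z_p$ is the set of residues modulo $p$. *)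

theory Defs
  imports Complex_Main "HOL-Computational_Algebra.Primes"
begin

definition w :: "int set \<Rightarrow> int" where
  "w S = (\<Sum>a\<in>S. a)"

definition subset_sums :: "int set \<Rightarrow> int set" where
  "subset_sums Q = w ` Pow Q"

definition k_subset_sums :: "int set \<Rightarrow> nat \<Rightarrow> int set" where
  "k_subset_sums Q k = w ` {A. A \<subseteq> Q \<and> card A = k}"

text \<open>Residues a in Z_p (represented by 0..p-1) hit by some k-subset sum modulo p\<close>
definition hit_residues :: "nat \<Rightarrow> int set \<Rightarrow> nat \<Rightarrow> int set" where
  "hit_residues p Q k = {a \<in> {0..<int p}. \<exists>M'. M' \<subseteq> Q \<and> card M' = k \<and> w M' mod int p = a mod int p}"

end

theory Submission
  imports Defs "HOL-Real_Asymp.Real_Asymp"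
begin


lemma div_Suc_diff: "(d::nat) > 0 \<Longrightarrow> Suc n div d = n div d + (if d dvd Suc n then 1 else 0)"
  by (auto simp: div_Suc dvd_eq_mod_eq_0)

lemma mult_Suc_card:
  assumes p: "prime (p::nat)" and lt: "Suc n < p ^ Suc m"
  shows "multiplicity p (Suc n) = card {j\<in>{1..m}. p ^ j dvd Suc n}"
proof -
  let ?e = "multiplicity p (Suc n)"
  have p1: "p > 1" using p prime_gt_1_nat by blast
  have "p ^ ?e dvd Suc n" by (rule multiplicity_dvd)
  hence "p ^ ?e \<le> Suc n" by (rule dvd_imp_le) simp
  hence "p ^ ?e < p ^ Suc m" using lt by linarith
  hence "?e < Suc m" using power_strict_increasing_iff[OF p1] by blast
  hence em: "?e \<le> m" by simp
  have "{j\<in>{1..m}. p ^ j dvd Suc n} = {1..?e}"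
    using em p1 by (auto simp: power_dvd_iff_le_multiplicity)
  thus ?thesis by simp
qed

lemma legendre:
  assumes p: "prime (p::nat)"
  shows "n < p ^ Suc m \<Longrightarrow> multiplicity p (fact n :: nat) = (\<Sum>j\<in>{1..m}. n div p ^ j)"
proof (induction n)
  case 0
  then show ?case by simp
next
  case (Suc n)
  have p1: "p > 1" using p prime_gt_1_nat by blast
  have "multiplicity p (fact (Suc n) :: nat) = multiplicity p (Suc n * fact n :: nat)"
    by (simp add: fact_Suc)
  also have "\<dots> = multiplicity p (Suc n) + multiplicity p (fact n :: nat)"
    using p by (intro prime_elem_multiplicity_mult_distrib) auto
  also have "multiplicity p (fact n :: nat) = (\<Sum>j\<in>{1..m}. n div p ^ j)"
    using Suc by simp
  also have "multiplicity p (Suc n) = card {j\<in>{1..m}. p ^ j dvd Suc n}"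
    using mult_Suc_card[OF p Suc.prems] .
  also have "\<dots> = (\<Sum>j\<in>{1..m}. if p ^ j dvd Suc n then 1 else 0)"
    by (simp add: sum.If_cases) (rule arg_cong[where f=card], auto)
  also have "\<dots> + (\<Sum>j\<in>{1..m}. n div p ^ j) = (\<Sum>j\<in>{1..m}. Suc n div p ^ j)"
    using p1 by (simp add: div_Suc_diff sum.distrib)
  finally show ?case .
qed

lemma prod_primes_dvd:
  fixes n :: nat
  assumes "finite A" "\<forall>p\<in>A. prime p \<and> p dvd n"
  shows "\<Prod>A dvd n"
  using assms
proof (induction A rule: finite_induct)
  case empty
  then show ?case by simp
next
  case (insert p A)
  have pp: "prime p" "p dvd n" using insert by auto
  have "\<not> p dvd \<Prod>A"
  proof
    assume "p dvd \<Prod>A"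
    then obtain q where "q \<in> A" "p dvd q" using prime_dvd_prod_iff[OF insert(1) pp(1), of id] by auto
    moreover have "prime q" using insert \<open>q \<in> A\<close> by auto
    ultimately have "p = q" using primes_dvd_imp_eq pp(1) by blast
    thus False using insert \<open>q \<in> A\<close> by auto
  qed
  hence "coprime p (\<Prod>A)" using prime_imp_coprime pp(1) by blast
  moreover have "\<Prod>A dvd n" using insert by auto
  ultimately have "p * \<Prod>A dvd n" using divides_mult pp(2) by blast
  thus ?case using insert by simp
qed

lemma binom_odd_le: "(2*m+1) choose m \<le> 4 ^ m"
proof -
  have "(\<Sum>k\<in>{m, m+1}. (2*m+1) choose k) \<le> (\<Sum>k\<le>2*m+1. (2*m+1) choose k)"
    by (intro sum_mono2) auto
  also have "\<dots> = 2 ^ (2*m+1)" by (rule choose_row_sum)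
  also have "(\<Sum>k\<in>{m, m+1}. (2*m+1) choose k) = 2 * ((2*m+1) choose m)"
    using binomial_symmetric[of m "2*m+1"] by simp
  finally show ?thesis by (simp add: power_mult power_add)
qed

lemma primes_mid_dvd:
  assumes "prime p" "m + 1 < p" "p \<le> 2*m+1"
  shows "p dvd ((2*m+1) choose m)"
proof -
  have "fact m * fact (2*m+1-m) * ((2*m+1) choose m) = (fact (2*m+1) :: nat)"
    by (rule binomial_fact_lemma) simp
  moreover have "p dvd (fact (2*m+1) :: nat)" using assms by (intro dvd_fact) (auto simp: prime_gt_0_nat Suc_leI)
  ultimately have "p dvd fact m * fact (m+1) * ((2*m+1) choose m)"
    by (metis add_diff_cancel_left' mult_2 add.assoc)
  moreover have "\<not> p dvd (fact m :: nat)" using prime_dvd_fact_iff[OF assms(1), of m] assms by linarith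
  moreover have "\<not> p dvd (fact (m+1) :: nat)" using prime_dvd_fact_iff[OF assms(1), of "m+1"] assms by linarith
  ultimately show ?thesis using assms(1) by (simp add: prime_dvd_mult_iff)
qed

lemma primorial_le: "(\<Prod>{p::nat. prime p \<and> p \<le> x}) \<le> 4 ^ x"
proof (induction x rule: less_induct)
  case (less x)
  show ?case
  proof (cases "x \<le> 2")
    case 1: True
    have "{p::nat. prime p \<and> p \<le> x} = (if x < 2 then {} else {2})"
      using 1 by (auto simp: le_eq_less_or_eq dest: prime_ge_2_nat)
    then show ?thesis using 1 by auto
  next
    case False
    show ?thesis
    proof (cases "even x")
      case True
      have "\<not> prime x" using False True prime_odd_nat by auto
      hence "{p::nat. prime p \<and> p \<le> x} = {p::nat. prime p \<and> p \<le> x - 1}"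
        by (auto simp: le_eq_less_or_eq)
      hence "\<Prod>{p::nat. prime p \<and> p \<le> x} \<le> 4 ^ (x - 1)" using less[of "x-1"] False by simp
      also have "\<dots> \<le> 4 ^ x" by (intro power_increasing) auto
      finally show ?thesis .
    next
      case odd: False
      then obtain m where x: "x = 2*m+1" using oddE by blast
      have m1: "m \<ge> 1" using x False by linarith
      let ?A = "{p::nat. prime p \<and> p \<le> m+1}"
      let ?B = "{p::nat. prime p \<and> m+1 < p \<and> p \<le> 2*m+1}"
      have AB: "{p::nat. prime p \<and> p \<le> x} = ?A \<union> ?B" using x by auto
      have "\<Prod>{p::nat. prime p \<and> p \<le> x} = \<Prod>?A * \<Prod>?B"
        unfolding AB by (rule prod.union_disjoint) auto
      also have "\<Prod>?A \<le> 4 ^ (m+1)" using less[of "m+1"] x m1 by simp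
      also have "\<Prod>?B \<le> 4 ^ m"
      proof -
        have "\<Prod>?B dvd ((2*m+1) choose m)"
          using primes_mid_dvd by (intro prod_primes_dvd) auto
        hence "\<Prod>?B \<le> ((2*m+1) choose m)" by (rule dvd_imp_le) simp
        thus ?thesis using binom_odd_le[of m] by linarith
      qed
      finally show ?thesis using x by (simp add: power_add mult_2 mult.assoc)
    qed
  qed
qed


lemma pow_gt: "prime (p::nat) \<Longrightarrow> k < p ^ k"
proof -
  assume "prime p"
  hence "2 \<le> p" by (rule prime_ge_2_nat)
  hence "2 ^ k \<le> p ^ k" by (rule power_mono) simp
  thus ?thesis using less_exp[of k] by linarith
qed

lemma cb_mult:
  assumes p: "prime (p::nat)"
  shows "int (multiplicity p ((2*N) choose N)) = (\<Sum>j\<in>{1..2*N}. int (2*N div p^j) - 2 * int (N div p^j))"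
proof -
  have "fact N * fact (2*N - N) * ((2*N) choose N) = (fact (2*N) :: nat)"
    by (rule binomial_fact_lemma) simp
  hence eq: "fact N * fact N * ((2*N) choose N) = (fact (2*N) :: nat)" by simp
  have "multiplicity p (fact (2*N) :: nat) = multiplicity p (fact N * fact N * ((2*N) choose N) :: nat)"
    by (simp add: eq)
  also have "\<dots> = multiplicity p (fact N :: nat) + multiplicity p (fact N :: nat) + multiplicity p ((2*N) choose N)"
    using p by (simp add: prime_elem_multiplicity_mult_distrib)
  finally have m: "multiplicity p (fact (2*N) :: nat) = 2 * multiplicity p (fact N :: nat) + multiplicity p ((2*N) choose N)"
    by simp
  have l1: "multiplicity p (fact (2*N) :: nat) = (\<Sum>j\<in>{1..2*N}. 2*N div p ^ j)"
    using pow_gt[OF p, of "Suc (2*N)"] by (intro legendre[OF p]) simp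
  have l2: "multiplicity p (fact N :: nat) = (\<Sum>j\<in>{1..2*N}. N div p ^ j)"
    using pow_gt[OF p, of "Suc (2*N)"] by (intro legendre[OF p]) simp
  have "int (multiplicity p ((2*N) choose N)) = int (\<Sum>j\<in>{1..2*N}. 2*N div p ^ j) - 2 * int (\<Sum>j\<in>{1..2*N}. N div p ^ j)"
    using m l1 l2 by simp
  also have "\<dots> = (\<Sum>j\<in>{1..2*N}. int (2*N div p^j) - 2 * int (N div p^j))"
    by (simp add: sum_subtractf sum_distrib_left)
  finally show ?thesis .
qed

lemma term_bounds:
  assumes d: "(d::nat) > 0"
  shows "0 \<le> int (2*N div d) - 2 * int (N div d)" "int (2*N div d) - 2 * int (N div d) \<le> 1"
    "2*N < d \<Longrightarrow> int (2*N div d) - 2 * int (N div d) = 0"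
proof -
  have a: "(N div d) * d \<le> N" by simp
  have b: "N < Suc (N div d) * d" using d div_less_iff_less_mult by blast
  have "2 * (N div d) \<le> 2*N div d" using a d by (subst less_eq_div_iff_mult_less_eq) auto
  moreover have "2*N div d < 2 * (N div d) + 2" using b d by (subst div_less_iff_less_mult) auto
  ultimately show "0 \<le> int (2*N div d) - 2 * int (N div d)" "int (2*N div d) - 2 * int (N div d) \<le> 1"
    by linarith+
  show "2*N < d \<Longrightarrow> int (2*N div d) - 2 * int (N div d) = 0" by simp
qed

lemma cb_pow_le:
  assumes p: "prime (p::nat)"
  shows "p ^ multiplicity p ((2*N) choose N) \<le> 2*N \<or> multiplicity p ((2*N) choose N) = 0"
proof (rule ccontr)
  let ?v = "multiplicity p ((2*N) choose N)"
  assume "\<not> ?thesis"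
  hence big: "2*N < p ^ ?v" and v0: "?v \<noteq> 0" by auto
  have p1: "p > 1" using p prime_gt_1_nat by blast
  have p0: "p > 0" using p1 by simp
  let ?t = "\<lambda>j. int (2*N div p^j) - 2 * int (N div p^j)"
  have "int ?v = (\<Sum>j\<in>{1..2*N}. ?t j)" by (rule cb_mult[OF p])
  also have "\<dots> \<le> (\<Sum>j\<in>{1..2*N}. if j < ?v then 1 else 0)"
  proof (rule sum_mono)
    fix j assume "j \<in> {1..2*N}"
    show "?t j \<le> (if j < ?v then 1 else 0)"
    proof (cases "j < ?v")
      case True
      then show ?thesis using term_bounds(2)[of "p^j" N] p0 by simp
    next
      case False
      hence "p ^ ?v \<le> p ^ j" using p1 by (intro power_increasing) auto
      then show ?thesis using term_bounds(3)[of "p^j" N] p0 big by simp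
    qed
  qed
  also have "\<dots> = int (card ({1..2*N} \<inter> {j. j < ?v}))"
    by (simp add: sum.If_cases)
  also have "card ({1..2*N} \<inter> {j. j < ?v}) \<le> card {1..<?v}"
    by (intro card_mono) auto
  finally show False using v0 by simp
qed

lemma cb_mid_zero:
  assumes p: "prime (p::nat)" and N5: "N \<ge> 5" and h1: "2*N < 3*p" and h2: "p \<le> N"
  shows "multiplicity p ((2*N) choose N) = 0"
proof -
  have p0: "p > 0" using p prime_gt_0_nat by blast
  have sq: "2*N < p^2"
  proof -
    have "(2*N)*(2*N) < (3*p)*(2*N)" using h1 N5 by (intro mult_less_mono1) auto
    moreover have "(3*p)*(2*N) \<le> (3*p)*(3*p)" using h1 by (intro mult_le_mono2) auto
    ultimately have "(2*N)*(2*N) < (3*p)*(3*p)" by linarith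
    hence A: "4*(N*N) < 9*(p*p)" by (simp add: algebra_simps)
    have "(4*N)*5 \<le> (4*N)*N" using mult_le_mono2[OF N5, of "4*N"] .
    hence B: "20*N \<le> 4*(N*N)" by (simp add: algebra_simps)
    from A B have "2*N < p*p" by linarith
    thus ?thesis by (simp add: power2_eq_square)
  qed
  let ?t = "\<lambda>j. int (2*N div p^j) - 2 * int (N div p^j)"
  have "\<forall>j\<in>{1..2*N}. ?t j = 0"
  proof
    fix j assume j: "j \<in> {1..2*N}"
    show "?t j = 0"
    proof (cases "j = 1")
      case True
      have "2 \<le> 2*N div p" using h2 p0 by (subst less_eq_div_iff_mult_less_eq) auto
      moreover have "2*N div p < 3" using h1 p0 by (subst div_less_iff_less_mult) auto
      ultimately have "2*N div p = 2" by linarith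
      moreover have "1 \<le> N div p" using h2 p0 by (subst less_eq_div_iff_mult_less_eq) auto
      moreover have "N div p < 2" using h1 p0 by (subst div_less_iff_less_mult) auto
      ultimately have "2*N div p = 2" "N div p = 1" by linarith+
      thus ?thesis using True by simp
    next
      case False
      hence "p^2 \<le> p^j" using j p0 by (intro power_increasing) auto
      then show ?thesis using term_bounds(3)[of "p^j" N] p0 sq by simp
    qed
  qed
  hence "int (multiplicity p ((2*N) choose N)) = 0" by (simp add: cb_mult[OF p])
  thus ?thesis by simp
qed




lemma erdos:
  fixes N :: nat
  assumes N5: "N \<ge> 5"
  shows "real (card {p. prime p \<and> N < p \<and> p \<le> 2*N}) * ln (2*N) \<ge>
           N * ln 4 / 3 - ln (2*N) - sqrt (2*N) * ln (2*N)"
proof -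
  define Cb where "Cb = (2*N) choose N"
  define v where "v = (\<lambda>p. multiplicity p Cb)"
  define pf where "pf = prime_factors Cb"
  have Cb0: "Cb > 0" unfolding Cb_def by simp
  have fpf: "finite pf" unfolding pf_def by simp
  have pfp: "\<And>p. p \<in> pf \<Longrightarrow> prime p \<and> v p > 0"
    unfolding pf_def v_def by (auto simp: prime_factors_multiplicity)
  have pfle: "p ^ v p \<le> 2*N" if "p \<in> pf" for p
  proof -
    have "prime p" "v p > 0" using pfp[OF that] by auto
    thus ?thesis using cb_pow_le[of p N] unfolding v_def Cb_def by auto
  qed
  have pfmid: "\<not> (2*N < 3*p \<and> p \<le> N)" if "p \<in> pf" for p
  proof
    assume h: "2*N < 3*p \<and> p \<le> N"
    have "prime p" "v p > 0" using pfp[OF that] by auto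
    thus False using cb_mid_zero[of p N] h N5 unfolding v_def Cb_def by auto
  qed
  define A1 where "A1 = {p\<in>pf. p*p \<le> 2*N}"
  define A2 where "A2 = {p\<in>pf. 2*N < p*p \<and> 3*p \<le> 2*N}"
  define A3 where "A3 = {p\<in>pf. 2*N < p*p \<and> 2*N < 3*p}"
  have pfU: "pf = A1 \<union> (A2 \<union> A3)" unfolding A1_def A2_def A3_def by auto
  have fin: "finite A1" "finite A2" "finite A3" unfolding A1_def A2_def A3_def using fpf by auto
  have "Cb = (\<Prod>p\<in>pf. p ^ v p)" unfolding pf_def v_def using prime_factorization_nat[OF Cb0] .
  also have "\<dots> = (\<Prod>p\<in>A1. p ^ v p) * ((\<Prod>p\<in>A2. p ^ v p) * (\<Prod>p\<in>A3. p ^ v p))"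
    unfolding pfU using fin
    by (subst prod.union_disjoint, simp_all, (auto simp: A1_def A2_def A3_def)[1],
        subst prod.union_disjoint, auto simp: A2_def A3_def)
  finally have Cbeq: "Cb = (\<Prod>p\<in>A1. p ^ v p) * ((\<Prod>p\<in>A2. p ^ v p) * (\<Prod>p\<in>A3. p ^ v p))" .
  have N1: "real (2*N) \<ge> 1" using N5 by simp
  have cA1: "real (card A1) \<le> sqrt (2*N)"
  proof -
    have "A1 \<subseteq> {1..nat \<lfloor>sqrt (2*N)\<rfloor>}"
    proof
      fix p assume p: "p \<in> A1"
      hence "real p ^ 2 \<le> 2*N" unfolding A1_def power2_eq_square by (simp flip: of_nat_mult)
      hence "real p \<le> sqrt (2*N)" by (rule real_le_rsqrt)
      hence "p \<le> nat \<lfloor>sqrt (2*N)\<rfloor>" by (simp add: le_nat_floor)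
      moreover have "p \<ge> 1" using p pfp[of p] prime_ge_1_nat unfolding A1_def by auto
      ultimately show "p \<in> {1..nat \<lfloor>sqrt (2*N)\<rfloor>}" by simp
    qed
    hence "card A1 \<le> nat \<lfloor>sqrt (2*N)\<rfloor>" using card_mono[of "{1..nat \<lfloor>sqrt (2*N)\<rfloor>}" A1] by simp
    hence "real (card A1) \<le> real (nat \<lfloor>sqrt (2*N)\<rfloor>)" by (simp only: of_nat_le_iff)
    also have "\<dots> \<le> sqrt (2*N)" by simp
    finally show ?thesis .
  qed
  have b1: "real (\<Prod>p\<in>A1. p ^ v p) \<le> real (2*N) powr sqrt (2*N)"
  proof -
    have "(\<Prod>p\<in>A1. p ^ v p) \<le> (2*N) ^ card A1"
      by (intro prod_le_power) (use pfle N5 in \<open>auto simp: A1_def\<close>)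
    hence "real (\<Prod>p\<in>A1. p ^ v p) \<le> real (2*N) ^ card A1" by (metis of_nat_le_iff of_nat_power)
    also have "\<dots> = real (2*N) powr real (card A1)" using N5 by (subst powr_realpow) auto
    also have "\<dots> \<le> real (2*N) powr sqrt (2*N)" using cA1 N1 by (intro powr_mono) auto
    finally show ?thesis .
  qed
  have b2: "real (\<Prod>p\<in>A2. p ^ v p) \<le> 4 powr (2*N/3)"
  proof -
    have v1: "v p = 1" if "p \<in> A2" for p
    proof -
      have "p ^ v p < p ^ 2" using that pfle[of p] unfolding A2_def by (simp add: power2_eq_square)
      hence "v p < 2" using pfp[of p] that prime_gt_1_nat unfolding A2_def
        by (metis (no_types, lifting) mem_Collect_eq power_strict_increasing_iff)
      thus ?thesis using pfp[of p] that unfolding A2_def by auto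
    qed
    have "(\<Prod>p\<in>A2. p ^ v p) = \<Prod>A2" using v1 by simp
    also have "\<Prod>A2 dvd \<Prod>{p::nat. prime p \<and> p \<le> 2*N div 3}"
      by (rule prod_dvd_prod_subset) (auto simp: A2_def dest: pfp)
    hence "\<Prod>A2 \<le> \<Prod>{p::nat. prime p \<and> p \<le> 2*N div 3}"
      by (rule dvd_imp_le) (auto intro!: prod_pos dest: prime_gt_0_nat)
    also have "\<dots> \<le> 4 ^ (2*N div 3)" by (rule primorial_le)
    finally have "real (\<Prod>p\<in>A2. p ^ v p) \<le> 4 ^ (2*N div 3)" by (metis of_nat_le_iff of_nat_power of_nat_numeral)
    also have "(4::real) ^ (2*N div 3) = 4 powr real (2*N div 3)" by (simp add: powr_realpow)
    also have "\<dots> \<le> 4 powr (2*N/3)"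
      by (intro powr_mono) (simp_all add: real_of_nat_div)
    finally show ?thesis .
  qed
  define P' where "P' = {p. prime p \<and> N < p \<and> p \<le> 2*N}"
  have b3: "real (\<Prod>p\<in>A3. p ^ v p) \<le> real (2*N) ^ card P'"
  proof -
    have "A3 \<subseteq> P'"
    proof
      fix p assume p: "p \<in> A3"
      hence "N < p" using pfmid[of p] unfolding A3_def by auto
      moreover have "p \<le> 2*N"
      proof -
        have "p ^ 1 \<le> p ^ v p" using pfp[of p] p prime_gt_0_nat unfolding A3_def
          by (intro power_increasing) auto
        thus ?thesis using pfle[of p] p unfolding A3_def by simp
      qed
      ultimately show "p \<in> P'" using pfp[of p] p unfolding P'_def A3_def by auto
    qed
    hence "card A3 \<le> card P'" by (intro card_mono) (auto simp: P'_def)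
    hence "(\<Prod>p\<in>A3. p ^ v p) \<le> (2*N) ^ card P'"
      by (intro prod_le_power) (use pfle N5 in \<open>auto simp: A3_def\<close>)
    thus ?thesis by (metis of_nat_le_iff of_nat_power)
  qed
  have lb: "4 ^ N / (2 * real N) \<le> real Cb"
    unfolding Cb_def using N5 by (intro central_binomial_lower_bound) auto
  have "real Cb \<le> real (2*N) powr sqrt (2*N) * (4 powr (2*N/3) * real (2*N) ^ card P')"
    using b1 b2 b3 by (subst Cbeq, simp only: of_nat_mult) (intro mult_mono, auto intro!: prod_nonneg mult_nonneg_nonneg)
  with lb have main: "4 ^ N / (2 * real N) \<le> real (2*N) powr sqrt (2*N) * (4 powr (2*N/3) * real (2*N) ^ card P')"
    by linarith
  have pos: "0 < (4::real) ^ N / (2 * real N)" using N5 by simp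
  have "ln (4 ^ N / (2 * real N)) \<le> ln (real (2*N) powr sqrt (2*N) * (4 powr (2*N/3) * real (2*N) ^ card P'))"
    using main pos by (subst ln_le_cancel_iff) auto
  hence "N * ln 4 - ln (2*N) \<le> sqrt (2*N) * ln (2*N) + (2*N/3 * ln 4 + card P' * ln (2*N))"
    using N5 by (simp add: ln_div ln_mult ln_realpow ring_distribs)
  thus ?thesis unfolding P'_def by linarith
qed


lemma asymp_aux: "eventually (\<lambda>x::real. (x/3 - ln(2*x) - sqrt(2*x)*ln(2*x))/ln(2*x) \<ge> x/(10*ln x)) at_top"
  by real_asymp

lemma ln4_ge1: "ln (4::real) \<ge> 1"
  using exp_le by (subst ln_ge_iff) auto

lemma prime_count:
  "\<exists>X0\<ge>4. \<forall>X::real. X \<ge> X0 \<longrightarrow> real (card {p::nat. prime p \<and> X/2 \<le> real p \<and> real p \<le> X}) \<ge> X / (40 * ln X)"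
proof -
  obtain x0 where x0: "\<And>x. x \<ge> x0 \<Longrightarrow> (x/3 - ln(2*x) - sqrt(2*x)*ln(2*x))/ln(2*x) \<ge> x/(10*ln x)"
    using asymp_aux unfolding eventually_at_top_linorder by blast
  define X0 where "X0 = max (2*x0+2) 12"
  have "\<forall>X::real. X \<ge> X0 \<longrightarrow> real (card {p::nat. prime p \<and> X/2 \<le> real p \<and> real p \<le> X}) \<ge> X / (40 * ln X)"
  proof (intro allI impI)
    fix X :: real assume X: "X \<ge> X0"
    define N where "N = nat \<lfloor>X/2\<rfloor>"
    have NX: "real N \<le> X/2" "X/2 < real N + 1" using X unfolding N_def X0_def by linarith+
    have N5: "N \<ge> 5" using NX X unfolding X0_def by linarith
    have Nx0: "real N \<ge> x0" using NX X unfolding X0_def by linarith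
    have NX4: "real N \<ge> X/4" using NX X unfolding X0_def by linarith
    define P' where "P' = {p. prime p \<and> N < p \<and> p \<le> 2*N}"
    have e: "real (card P') * ln (2*N) \<ge> N * ln 4 / 3 - ln (2*N) - sqrt (2*N) * ln (2*N)"
      unfolding P'_def using erdos[OF N5] .
    have l2: "ln (2 * real N) > 0" using N5 by simp
    have "N * ln 4 / 3 \<ge> N / 3" using mult_left_mono[OF ln4_ge1, of "real N"] by simp
    hence "real (card P') * ln (2*N) \<ge> N/3 - ln (2*N) - sqrt (2*N) * ln (2*N)" using e by simp
    hence "real (card P') \<ge> (N/3 - ln (2*N) - sqrt (2*N) * ln (2*N)) / ln (2*N)"
      using l2 by (simp add: divide_le_eq)
    also have "(N/3 - ln (2*N) - sqrt (2*N) * ln (2*N)) / ln (2*N) \<ge> N / (10 * ln N)"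
      using x0[OF Nx0] by simp
    finally have c1: "real (card P') \<ge> N / (10 * ln N)" .
    have lnN: "ln (real N) > 0" "ln (real N) \<le> ln X" using N5 NX X unfolding X0_def by auto
    have "X / (40 * ln X) = (X/4) / (10 * ln X)" by simp
    also have "\<dots> \<le> N / (10 * ln N)"
      using NX4 lnN by (intro frac_le) auto
    finally have c2: "X / (40 * ln X) \<le> real (card P')" using c1 by linarith
    have "P' \<subseteq> {p::nat. prime p \<and> X/2 \<le> real p \<and> real p \<le> X}"
    proof
      fix p assume "p \<in> P'"
      hence "prime p" "N + 1 \<le> p" "p \<le> 2*N" unfolding P'_def by auto
      moreover have "real (N+1) \<le> real p" "real p \<le> real (2*N)" using calculation(2,3) by (simp only: of_nat_le_iff)+
      ultimately show "p \<in> {p::nat. prime p \<and> X/2 \<le> real p \<and> real p \<le> X}" using NX by auto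
    qed
    moreover have "finite {p::nat. prime p \<and> X/2 \<le> real p \<and> real p \<le> X}"
      by (rule finite_subset[of _ "{..nat \<lceil>X\<rceil>}"]) (auto, linarith)
    ultimately have "card P' \<le> card {p::nat. prime p \<and> X/2 \<le> real p \<and> real p \<le> X}" by (rule card_mono[rotated])
    thus "real (card {p::nat. prime p \<and> X/2 \<le> real p \<and> real p \<le> X}) \<ge> X / (40 * ln X)" using c2 by linarith
  qed
  moreover have "X0 \<ge> 4" unfolding X0_def by simp
  ultimately show ?thesis by blast
qed



lemma img_coll:
  assumes "finite T"
  shows "card T \<le> card (f ` T) + card {(x,y) \<in> T \<times> T. x \<noteq> y \<and> f x = f y}"
proof -
  define g where "g = (\<lambda>v. inv_into T f v)"
  define R where "R = g ` f ` T"
  have RT: "R \<subseteq> T" unfolding R_def g_def by (auto intro: inv_into_into)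
  have c1: "card R \<le> card (f ` T)" unfolding R_def by (rule card_image_le) (use assms in auto)
  have "inj_on (\<lambda>x. (x, g (f x))) (T - R)" by (auto simp: inj_on_def)
  moreover have "(\<lambda>x. (x, g (f x))) ` (T - R) \<subseteq> {(x,y) \<in> T \<times> T. x \<noteq> y \<and> f x = f y}"
  proof
    fix z assume "z \<in> (\<lambda>x. (x, g (f x))) ` (T - R)"
    then obtain x where x: "x \<in> T" "x \<notin> R" "z = (x, g (f x))" by auto
    have "g (f x) \<in> T" unfolding g_def using x by (auto intro: inv_into_into)
    moreover have "f (g (f x)) = f x" unfolding g_def using x by (auto intro: f_inv_into_f)
    moreover have "x \<noteq> g (f x)" using x unfolding R_def by auto
    ultimately show "z \<in> {(x,y) \<in> T \<times> T. x \<noteq> y \<and> f x = f y}" using x by auto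
  qed
  moreover have "finite {(x,y) \<in> T \<times> T. x \<noteq> y \<and> f x = f y}"
    by (rule finite_subset[of _ "T \<times> T"]) (use assms in auto)
  ultimately have c2: "card (T - R) \<le> card {(x,y) \<in> T \<times> T. x \<noteq> y \<and> f x = f y}"
    by (intro card_inj_on_le) auto
  have "card T = card R + card (T - R)"
    using RT assms by (metis card_Diff_subset finite_subset le_add_diff_inverse card_mono)
  thus ?thesis using c1 c2 by linarith
qed

lemma dvd_count:
  fixes d :: int and Y :: real
  assumes "finite P" "\<forall>p\<in>P. prime p \<and> real p \<ge> Y" "Y > 1" "d \<noteq> 0"
  shows "real (card {p\<in>P. int p dvd d}) * ln Y \<le> ln \<bar>d\<bar>"
proof -
  define D where "D = {p\<in>P. int p dvd d}"
  have fD: "finite D" unfolding D_def using assms by auto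
  have "\<Prod>D dvd nat \<bar>d\<bar>" using assms by (intro prod_primes_dvd) (auto simp: D_def fD)
  hence "\<Prod>D \<le> nat \<bar>d\<bar>" by (rule dvd_imp_le) (use assms in auto)
  hence le1: "real (\<Prod>D) \<le> \<bar>d\<bar>" by linarith
  have "Y ^ card D = (\<Prod>p\<in>D. Y)" by simp
  also have "\<dots> \<le> (\<Prod>p\<in>D. real p)" using assms by (intro prod_mono) (auto simp: D_def)
  also have "\<dots> = real (\<Prod>D)" by simp
  finally have "Y ^ card D \<le> \<bar>d\<bar>" using le1 by linarith
  hence "ln (Y ^ card D) \<le> ln \<bar>d\<bar>" using assms by (subst ln_le_cancel_iff) auto
  thus ?thesis unfolding D_def using assms by (simp add: ln_realpow)
qed

lemma coll_sum:
  fixes T :: "int set" and Y B :: real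
  assumes P: "finite P" "\<forall>p\<in>P. prime p \<and> real p \<ge> Y" "Y > 1"
    and T: "finite T" "\<forall>x\<in>T. \<bar>x\<bar> \<le> B" "B \<ge> 1"
  shows "(\<Sum>p\<in>P. real (card {(x,y) \<in> T \<times> T. x \<noteq> y \<and> x mod int p = y mod int p}))
          \<le> real (card T) ^ 2 * (ln (2*B) / ln Y)"
proof -
  have lY: "ln Y > 0" using P by simp
  have "(\<Sum>p\<in>P. real (card {(x,y) \<in> T \<times> T. x \<noteq> y \<and> x mod int p = y mod int p}))
      = (\<Sum>p\<in>P. \<Sum>z\<in>T \<times> T. if fst z \<noteq> snd z \<and> int p dvd fst z - snd z then 1 else 0)"
  proof (intro sum.cong refl)
    fix p assume "p \<in> P"
    have "{(x,y) \<in> T \<times> T. x \<noteq> y \<and> x mod int p = y mod int p} = {z\<in>T \<times> T. fst z \<noteq> snd z \<and> int p dvd fst z - snd z}"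
      by (auto simp: mod_eq_dvd_iff)
    thus "real (card {(x,y) \<in> T \<times> T. x \<noteq> y \<and> x mod int p = y mod int p}) =
      (\<Sum>z\<in>T \<times> T. if fst z \<noteq> snd z \<and> int p dvd fst z - snd z then 1 else 0)"
      using T by (simp add: sum.inter_filter[symmetric])
  qed
  also have "\<dots> = (\<Sum>z\<in>T \<times> T. \<Sum>p\<in>P. if fst z \<noteq> snd z \<and> int p dvd fst z - snd z then 1 else 0)"
    by (rule sum.swap)
  also have "\<dots> \<le> (\<Sum>z\<in>T \<times> T. ln (2*B) / ln Y)"
  proof (rule sum_mono)
    fix z assume z: "z \<in> T \<times> T"
    show "(\<Sum>p\<in>P. if fst z \<noteq> snd z \<and> int p dvd fst z - snd z then 1 else 0) \<le> ln (2*B) / ln Y"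
    proof (cases "fst z = snd z")
      case True
      have "ln (2*B) / ln Y \<ge> 0" using T(3) lY by simp
      thus ?thesis using True by simp
    next
      case False
      define d where "d = fst z - snd z"
      have d0: "d \<noteq> 0" using False unfolding d_def by simp
      have db: "\<bar>d\<bar> \<le> 2*B" using z T unfolding d_def by (auto simp: abs_diff_le_iff) (smt (verit) mem_Sigma_iff)+
      have "(\<Sum>p\<in>P. if fst z \<noteq> snd z \<and> int p dvd fst z - snd z then 1 else (0::real)) = real (card {p\<in>P. int p dvd d})"
        using False P by (simp add: sum.If_cases d_def Int_def conj_commute)
      also have "\<dots> \<le> ln \<bar>d\<bar> / ln Y" using dvd_count[OF P d0] lY by (simp add: le_divide_eq)
      also have "\<dots> \<le> ln (2*B) / ln Y" using db d0 lY by (intro divide_right_mono) auto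
      finally show ?thesis .
    qed
  qed
  also have "\<dots> = real (card T) ^ 2 * (ln (2*B) / ln Y)" using T by (simp add: power2_eq_square card_cartesian_product)
  finally show ?thesis .
qed


theorem mainTheorem8:
  fixes c :: real
  assumes "c > 0"
  shows "\<exists>C::real > 0. \<forall>(n::nat) (Q::int set) (k::nat) (X::real).
    finite Q \<and> card Q \<le> n \<and> (\<forall>q\<in>Q. real_of_int \<bar>q\<bar> \<le> 2 powr (c * real n))
    \<and> 1 \<le> k \<and> k \<le> card Q
    \<and> real (card (k_subset_sums Q k)) \<ge> real (card (subset_sums Q)) / real (card Q)
    \<and> 4 \<le> X \<and> X \<le> real (card (subset_sums Q))
    \<longrightarrow> real (card {p::nat. prime p \<and> X / 2 \<le> real p \<and> real p \<le> X
                        \<and> real (card (hit_residues p Q k)) \<ge> real p / (C * real n ^ 2)})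
        \<ge> 9 / 10 * real (card {p::nat. prime p \<and> X / 2 \<le> real p \<and> real p \<le> X})"
proof -
  obtain X0 where X04: "X0 \<ge> 4" and X0: "\<And>X::real. X \<ge> X0 \<Longrightarrow>
      real (card {p::nat. prime p \<and> X/2 \<le> real p \<and> real p \<le> X}) \<ge> X / (40 * ln X)"
    using prime_count by blast
  define K where "K = 2 + c"
  define C where "C = max X0 (4800 * K)"
  have K0: "K > 0" unfolding K_def using assms by simp
  have K2: "K \<ge> 2" unfolding K_def using assms by simp
  have C0: "C > 0" unfolding C_def using X04 by simp
  have CX0: "C \<ge> X0" and CK: "C \<ge> 4800 * K" unfolding C_def by auto
  show ?thesis
  proof (intro exI[of _ C] conjI allI impI)
    show "C > 0" by (rule C0)
    fix n :: nat and Q :: "int set" and k :: nat and X :: real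
    assume H: "finite Q \<and> card Q \<le> n \<and> (\<forall>q\<in>Q. real_of_int \<bar>q\<bar> \<le> 2 powr (c * real n))
    \<and> 1 \<le> k \<and> k \<le> card Q
    \<and> real (card (k_subset_sums Q k)) \<ge> real (card (subset_sums Q)) / real (card Q)
    \<and> 4 \<le> X \<and> X \<le> real (card (subset_sums Q))"
    hence fQ: "finite Q" and cQn: "card Q \<le> n" and qb: "\<forall>q\<in>Q. real_of_int \<bar>q\<bar> \<le> 2 powr (c * real n)"
      and k1: "1 \<le> k" and kQ: "k \<le> card Q"
      and hS: "real (card (k_subset_sums Q k)) \<ge> real (card (subset_sums Q)) / real (card Q)"
      and X4: "4 \<le> X" and XW: "X \<le> real (card (subset_sums Q))" by auto
    define P where "P = {p::nat. prime p \<and> X / 2 \<le> real p \<and> real p \<le> X}"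
    define G where "G = {p::nat. prime p \<and> X / 2 \<le> real p \<and> real p \<le> X
                        \<and> real (card (hit_residues p Q k)) \<ge> real p / (C * real n ^ 2)}"
    define S where "S = k_subset_sums Q k"
    have n1: "n \<ge> 1" using k1 kQ cQn by linarith
    have fP: "finite P" unfolding P_def
      by (rule finite_subset[of _ "{..nat \<lceil>X\<rceil>}"]) (auto, linarith)
    have GP: "G = {p\<in>P. real (card (hit_residues p Q k)) \<ge> real p / (C * real n ^ 2)}"
      unfolding G_def P_def by auto
    have fG: "finite G" using fP GP by simp
    have fhit: "finite (hit_residues p Q k)" for p unfolding hit_residues_def
      by (rule finite_subset[of _ "{0..<int p}"]) auto
    have Ssub: "\<exists>M'. M' \<subseteq> Q \<and> card M' = k \<and> x = w M'" if "x \<in> S" for x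
      using that unfolding S_def k_subset_sums_def by auto
    have hitS: "x mod int p \<in> hit_residues p Q k" if "x \<in> S" "p > 0" for x p
      using Ssub[OF that(1)] that(2) unfolding hit_residues_def by auto
    obtain A0 where A0: "A0 \<subseteq> Q" "card A0 = k" using obtain_subset_with_card_n[OF kQ] by blast
    have S0: "w A0 \<in> S" unfolding S_def k_subset_sums_def using A0 by auto
    have hit1: "real (card (hit_residues p Q k)) \<ge> 1" if "p > 0" for p
    proof -
      have "hit_residues p Q k \<noteq> {}" using hitS[OF S0 that] by auto
      hence "card (hit_residues p Q k) \<ge> 1" using fhit[of p] by (simp add: Suc_le_eq card_gt_0_iff)
      thus ?thesis by simp
    qed
    have Cn1: "C \<le> C * real n" using C0 n1 by simp
    have n21: "1 \<le> real n ^ 2" using n1 by simp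
    have Cn: "C * real n ^ 2 \<ge> C" using mult_left_mono[OF n21, of C] C0 by simp
    show "real (card G) \<ge> 9 / 10 * real (card P)"
    proof (cases "X \<le> C * real n ^ 2")
      case True
      have "\<forall>p\<in>P. real p / (C * real n ^ 2) \<le> real (card (hit_residues p Q k))"
      proof
        fix p assume "p \<in> P"
        hence p0: "p > 0" and pX: "real p \<le> X" unfolding P_def using prime_gt_0_nat by auto
        have "real p / (C * real n ^ 2) \<le> 1" using pX True C0 n1 by (simp add: divide_le_eq)
        thus "real p / (C * real n ^ 2) \<le> real (card (hit_residues p Q k))" using hit1[OF p0] by linarith
      qed
      hence "G = P" unfolding GP by auto
      thus ?thesis by simp
    next
      case False
      hence XC: "X > C * real n ^ 2" by simp
      hence XX0: "X \<ge> X0" using Cn CX0 by linarith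
      have cP: "real (card P) \<ge> X / (40 * ln X)" unfolding P_def using X0[OF XX0] .
      have lnX: "ln X > 0" using X4 by simp
      define a where "a = X / (C * real n ^ 2)"
      have Cn0: "C * real n ^ 2 > 0" using C0 n1 by simp
      have a1: "a > 1" unfolding a_def using XC Cn0 by (simp add: less_divide_eq)
      define t where "t = nat \<lceil>2 * a\<rceil>"
      have t1: "real t \<ge> 2 * a" "real t \<le> 3 * a" unfolding t_def using a1 by linarith+
      have t0: "t > 0" using t1 a1 by linarith
      have cQ0: "card Q > 0" using k1 kQ by linarith
      have "X / real n \<le> real (card (subset_sums Q)) / real n" using XW n1 by (simp add: divide_right_mono)
      also have "\<dots> \<le> real (card (subset_sums Q)) / real (card Q)"
        using cQn cQ0 by (intro divide_left_mono) auto
      finally have cS: "real (card S) \<ge> X / real n" using hS unfolding S_def by linarith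
      have "3 * a \<le> X / real n"
      proof -
        have "3 * a = X / (C * real n / 3 * real n)" unfolding a_def by (simp add: power2_eq_square field_simps)
        also have "\<dots> \<le> X / (1 * real n)"
        proof (intro divide_left_mono mult_right_mono)
          show "1 \<le> C * real n / 3" 
          proof -
            have "3 \<le> C" using CK K2 by linarith
            hence "3 \<le> C * real n" using Cn1 by linarith
            thus ?thesis by simp
          qed
        qed (use X4 n1 C0 in auto)
        finally show ?thesis by simp
      qed
      hence tS: "t \<le> card S" using t1 cS by linarith
      have fS: "finite S" unfolding S_def k_subset_sums_def
        by (rule finite_imageI, rule finite_subset[of _ "Pow Q"]) (use fQ in auto)
      obtain T where TS: "T \<subseteq> S" and cT: "card T = t" and fT: "finite T"
        using obtain_subset_with_card_n[OF tS] by blast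
      define coll where "coll = (\<lambda>p::nat. card {(x,y) \<in> T \<times> T. x \<noteq> y \<and> x mod int p = y mod int p})"
      have good: "p \<in> G" if pP: "p \<in> P" and cp: "real (coll p) \<le> real t / 2" for p
      proof -
        have p0: "p > 0" and pX: "real p \<le> X" using pP unfolding P_def using prime_gt_0_nat by auto
        have "card T \<le> card ((\<lambda>x. x mod int p) ` T) + coll p"
          unfolding coll_def using img_coll[OF fT] .
        moreover have "(\<lambda>x. x mod int p) ` T \<subseteq> hit_residues p Q k" using hitS TS p0 by auto
        hence "card ((\<lambda>x. x mod int p) ` T) \<le> card (hit_residues p Q k)" using fhit by (intro card_mono)
        ultimately have "real t \<le> real (card (hit_residues p Q k)) + real (coll p)" using cT by linarith
        hence "real (card (hit_residues p Q k)) \<ge> a" using cp t1 by linarith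
        moreover have "real p / (C * real n ^ 2) \<le> a" unfolding a_def using pX Cn0 by (simp add: divide_right_mono)
        ultimately show ?thesis unfolding GP using pP by auto
      qed
      define Bad where "Bad = {p\<in>P. real (coll p) > real t / 2}"
      have PBG: "P - Bad \<subseteq> G"
      proof
        fix p assume "p \<in> P - Bad"
        hence "p \<in> P" "\<not> real (coll p) > real t / 2" unfolding Bad_def by auto
        thus "p \<in> G" using good not_less by blast
      qed
      have fBad: "finite Bad" using fP unfolding Bad_def by auto
      define B where "B = real n * 2 powr (c * real n)"
      have pw1: "2 powr (c * real n) \<ge> 1" using assms by (intro ge_one_powr_ge_zero) auto
      have B1: "B \<ge> 1" unfolding B_def using n1 pw1
        using mult_mono[of 1 "real n" 1 "2 powr (c * real n)"] by simp
      have TB: "\<forall>x\<in>T. \<bar>real_of_int x\<bar> \<le> B"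
      proof
        fix x assume "x \<in> T"
        then obtain M' where M': "M' \<subseteq> Q" "card M' = k" "x = w M'" using Ssub TS by blast
        have fM: "finite M'" using M' fQ finite_subset by auto
        have "\<bar>real_of_int x\<bar> = \<bar>\<Sum>q\<in>M'. real_of_int q\<bar>" using M' unfolding w_def by simp
        also have "\<dots> \<le> (\<Sum>q\<in>M'. \<bar>real_of_int q\<bar>)" by (rule sum_abs)
        also have "\<dots> \<le> (\<Sum>q\<in>M'. 2 powr (c * real n))" using qb M' by (intro sum_mono) auto
        also have "\<dots> = real k * 2 powr (c * real n)" using M' by simp
        also have "\<dots> \<le> B" unfolding B_def using kQ cQn by (intro mult_right_mono) auto
        finally show "\<bar>real_of_int x\<bar> \<le> B" .
      qed
      have Pprop: "\<forall>p\<in>P. prime p \<and> real p \<ge> X/2" unfolding P_def by auto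
      have Y1: "X/2 > 1" using X4 by simp
      have sumc: "(\<Sum>p\<in>P. real (coll p)) \<le> real t ^ 2 * (ln (2*B) / ln (X/2))"
        unfolding coll_def using coll_sum[OF fP Pprop Y1 fT TB B1] cT by simp
      define L where "L = ln (2*B) / ln (X/2)"
      have L0: "L \<ge> 0" unfolding L_def using B1 Y1 by simp
      have "real (card Bad) * (real t / 2) = (\<Sum>p\<in>Bad. real t / 2)" by simp
      also have "\<dots> \<le> (\<Sum>p\<in>Bad. real (coll p))" unfolding Bad_def by (intro sum_mono) auto
      also have "\<dots> \<le> (\<Sum>p\<in>P. real (coll p))" using fP unfolding Bad_def by (intro sum_mono2) auto
      finally have "real (card Bad) * (real t / 2) \<le> real t ^ 2 * L" using sumc unfolding L_def by linarith
      hence cB1: "real (card Bad) \<le> 2 * real t * L" using t0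
        by (simp add: power2_eq_square field_simps) 
      have lnB: "ln (2*B) \<le> K * real n"
      proof -
        have e: "ln (2*B) = ln 2 + ln (real n) + c * real n * ln 2"
          unfolding B_def using n1 by (simp add: ln_mult)
        have a: "ln 2 \<le> (1::real)" using ln_le_minus_one[of 2] by simp
        have b: "ln (real n) \<le> real n" using ln_le_minus_one[of "real n"] n1 by simp
        have d: "c * real n * ln 2 \<le> c * real n * 1"
          using a assms by (intro mult_left_mono) auto
        have f: "K * real n = 2 * real n + c * real n" unfolding K_def by (simp add: algebra_simps)
        show ?thesis using e a b d f n1 by linarith
      qed
      have lnY: "ln (X/2) \<ge> ln X / 2"
      proof -
        have "X * 4 \<le> X * X" using X4 by (intro mult_left_mono) auto
        hence "X \<le> (X/2) * (X/2)" by simp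
        hence "ln X \<le> ln ((X/2) * (X/2))" using X4 by (subst ln_le_cancel_iff) auto
        also have "\<dots> = 2 * ln (X/2)" using X4 by (subst ln_mult) auto
        finally show ?thesis by simp
      qed
      have LK: "L \<le> K * real n / (ln X / 2)" unfolding L_def
        using lnB lnY lnX K0 n1 B1 by (intro frac_le) auto
      have "real (card Bad) \<le> 2 * (3 * a) * (K * real n / (ln X / 2))"
      proof -
        have "2 * real t * L \<le> 2 * (3 * a) * L" using t1 L0 by (intro mult_right_mono) auto
        also have "\<dots> \<le> 2 * (3 * a) * (K * real n / (ln X / 2))" using LK a1 by (intro mult_left_mono) auto
        finally show ?thesis using cB1 by linarith
      qed
      also have "2 * (3 * a) * (K * real n / (ln X / 2)) = (12 * K * X) / (C * real n * ln X)"
        unfolding a_def using lnX C0 n1 by (simp add: power2_eq_square field_simps)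
      also have "\<dots> \<le> (12 * K * X) / (4800 * K * ln X)"
      proof (rule frac_le)
        show "0 \<le> 12 * K * X" using K0 X4 by simp
        show "0 < 4800 * K * ln X" using K0 lnX by simp
        have "4800 * K \<le> C * real n" using CK Cn1 by linarith
        thus "4800 * K * ln X \<le> C * real n * ln X" using lnX by (intro mult_right_mono) auto
      qed simp
      also have "\<dots> = X / (400 * ln X)" using K0 by (simp add: field_simps)
      also have "\<dots> \<le> real (card P) / 10" using cP by (simp add: field_simps)
      finally have cBad: "real (card Bad) \<le> real (card P) / 10" .
      have "card P - card Bad \<le> card (P - Bad)" by (simp add: diff_card_le_card_Diff fBad)
      also have "card (P - Bad) \<le> card G" using PBG fG by (intro card_mono)
      finally have "card P \<le> card G + card Bad" by linarith
      hence "real (card P) \<le> real (card G) + real (card Bad)" by linarith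
      thus ?thesis using cBad by linarith
    qed
  qed
qed

end
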